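(* Let $X_1,\dots,X_n$ be independent random variables with $X_i\sim\mathsf{Gam}(\alpha_i,\beta_i)$ (shape $\alpha_i>0$, rate $\beta_i>0$). Define $S_n=\sum_{i=1}^nX_i$, $\mu_n=\mathbb E[S_n]$ and $\sigma_n^2=\mathrm{Var}[S_n]$. Let $Z\sim\mathsf N(\mu_n,\sigma_n^2)$ and $G\sim\mathsf{Gam}(\alpha,\beta)$ with $\alpha/\beta=\mu_n$ and $\alpha/\beta^2=\sigma_n^2$. Denote the $j$th cumulants of $S_n$, $Z$, $G$ by $\kappa_j^{S_n}$, $\kappa_j^Z$, $\kappa_j^G$. Then $0<\kappa_1^{S_n}=\kappa_1^Z=\kappa_1^G=\mu_n$, $0<\kappa_2^{S_n}=\kappa_2^Z=\kappa_2^G=\sigma_n^2$, and for all $j\ge3$, \[ 0=\kappa_j^Z<\kappa_j^G\le\kappa_j^{S_n}. \]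
   Context: $\mathsf{Gam}(a,b)$ denotes the gamma distribution with shape $a$ and rate $b$ (density $b^a x^{a-1}e^{-bx}/\Gamma(a)$, mean $a/b$, variance $a/b^2$). *)

theory Defs
  imports "HOL-Probability.Probability"
begin

definition gamma_density :: "real \<Rightarrow> real \<Rightarrow> real \<Rightarrow> real" where
  "gamma_density a b x =
     (if x \<le> 0 then 0 else b powr a * x powr (a - 1) * exp (- b * x) / Gamma a)"

definition cumulant :: "'a measure \<Rightarrow> ('a \<Rightarrow> real) \<Rightarrow> nat \<Rightarrow> real" where
  "cumulant M X j = (deriv ^^ j) (\<lambda>t. ln (\<integral>\<omega>. exp (t * X \<omega>) \<partial>M)) 0"

end

theory Submission
  imports Defs
begin

lemma gamma_h_integral:
  fixes p c :: real assumes p: "p > 0" and c: "c > 0"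
  shows "has_bochner_integral lborel (\<lambda>x. if x \<le> 0 then 0 else x powr (p-1) * exp(-c*x)) (Gamma p / c powr p)"
proof -
  define h where "h = (\<lambda>x::real. if x \<le> 0 then 0 else x powr (p-1) * exp(-c*x))"
  define g where "g = (\<lambda>t::real. indicator {0..} t * t powr (p - 1) / exp t)"
  have hm[measurable]: "h \<in> borel_measurable borel" unfolding h_def by measurable
  have gm[measurable]: "g \<in> borel_measurable borel" unfolding g_def by measurable
  have h0: "0 \<le> h x" for x unfolding h_def by auto
  have G: "ennreal (Gamma p) = (\<integral>\<^sup>+x. ennreal (g x) \<partial>lborel)"
    using Gamma_conv_nn_integral_real[OF p] unfolding g_def by simp
  also have "\<dots> = ennreal \<bar>c\<bar> * (\<integral>\<^sup>+x. ennreal (g (0 + c * x)) \<partial>lborel)"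
    by (rule nn_integral_real_affine) (use c in auto)
  also have "(\<lambda>x. ennreal (g (0 + c * x))) = (\<lambda>x. ennreal (c powr (p-1)) * ennreal (h x))"
  proof
    fix x :: real
    show "ennreal (g (0 + c * x)) = ennreal (c powr (p-1)) * ennreal (h x)"
    proof (cases "x \<le> 0")
      case True
      then have "g (c*x) = 0" using c unfolding g_def
        by (cases "x = 0") (auto simp: indicator_def zero_le_mult_iff)
      then show ?thesis using True by (simp add: h_def)
    next
      case False
      then have "g (c*x) = c powr (p-1) * h x" using c unfolding g_def h_def
        by (simp add: powr_mult exp_minus field_simps)
      then show ?thesis using c h0[of x] by (simp add: ennreal_mult)
    qed
  qed
  also have "(\<integral>\<^sup>+x. ennreal (c powr (p-1)) * ennreal (h x) \<partial>lborel) = ennreal (c powr (p-1)) * (\<integral>\<^sup>+x. ennreal (h x) \<partial>lborel)"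
    by (rule nn_integral_cmult) measurable
  finally have E: "ennreal (Gamma p) = ennreal (c powr p) * (\<integral>\<^sup>+x. ennreal (h x) \<partial>lborel)"
    using c by (simp add: ennreal_mult[symmetric] mult.assoc[symmetric] powr_mult_base)
  have "(\<integral>\<^sup>+x. ennreal (h x) \<partial>lborel) = ennreal (1 / c powr p) * (ennreal (c powr p) * (\<integral>\<^sup>+x. ennreal (h x) \<partial>lborel))"
    using c by (simp add: mult.assoc[symmetric] ennreal_mult[symmetric])
  also have "\<dots> = ennreal (Gamma p / c powr p)"
    using c Gamma_real_pos[OF p] by (simp add: E[symmetric] ennreal_mult[symmetric])
  finally have N: "(\<integral>\<^sup>+x. ennreal (h x) \<partial>lborel) = ennreal (Gamma p / c powr p)" .
  have "has_bochner_integral lborel h (Gamma p / c powr p)"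
    by (rule has_bochner_integral_nn_integral) (use h0 N c Gamma_real_pos[OF p] in auto)
  then show ?thesis unfolding h_def .
qed


lemma gamma_moment:
  fixes Y :: "'a \<Rightarrow> real"
  assumes D: "distributed M lborel Y (\<lambda>x. ennreal (gamma_density a b x))"
    and a: "a > 0" and b: "b > 0" and t: "t < b"
  shows "integrable M (\<lambda>\<omega>. Y \<omega> ^ k * exp (t * Y \<omega>))"
    and "(\<integral>\<omega>. Y \<omega> ^ k * exp (t * Y \<omega>) \<partial>M) = b powr a * Gamma (a + k) / (Gamma a * (b - t) powr (a + k))"
proof -
  let ?g = "\<lambda>x::real. x ^ k * exp (t * x)"
  have gm: "?g \<in> borel_measurable lborel" by measurable
  have nn: "0 \<le> gamma_density a b x" for x
    unfolding gamma_density_def using a b Gamma_real_pos[OF a] by auto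
  have eq: "(\<lambda>x. gamma_density a b x * ?g x) = (\<lambda>x. (b powr a / Gamma a) *
     (if x \<le> 0 then 0 else x powr (a + k - 1) * exp (-(b - t) * x)))"
  proof
    fix x :: real
    show "gamma_density a b x * ?g x = (b powr a / Gamma a) *
     (if x \<le> 0 then 0 else x powr (a + k - 1) * exp (-(b - t) * x))"
    proof (cases "x \<le> 0")
      case False
      then have "x powr (a + k - 1) = x powr (a - 1) * x ^ k"
        by (simp add: powr_add[symmetric] powr_realpow[symmetric] algebra_simps)
      moreover have "exp (-(b - t) * x) = exp (- b * x) * exp (t * x)"
        by (simp add: exp_add[symmetric] algebra_simps)
      ultimately show ?thesis using False unfolding gamma_density_def by simp
    qed (simp add: gamma_density_def)
  qed
  have HB: "has_bochner_integral lborel (\<lambda>x. gamma_density a b x * ?g x)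
      (b powr a / Gamma a * (Gamma (a + k) / (b - t) powr (a + k)))"
    unfolding eq
    by (rule has_bochner_integral_mult_right, rule gamma_h_integral) (use a t in auto)
  show "integrable M (\<lambda>\<omega>. Y \<omega> ^ k * exp (t * Y \<omega>))"
    using distributed_integrable[OF D gm] nn integrable.intros[OF HB] by auto
  have "(\<integral>\<omega>. Y \<omega> ^ k * exp (t * Y \<omega>) \<partial>M) = (\<integral>x. gamma_density a b x * ?g x \<partial>lborel)"
    using distributed_integral[OF D gm] nn by simp
  also have "\<dots> = b powr a / Gamma a * (Gamma (a + k) / (b - t) powr (a + k))"
    using HB by (rule has_bochner_integral_integral_eq)
  finally show "(\<integral>\<omega>. Y \<omega> ^ k * exp (t * Y \<omega>) \<partial>M) = b powr a * Gamma (a + k) / (Gamma a * (b - t) powr (a + k))"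
    by simp
qed

lemma aux_frac1: "(P::real) \<noteq> 0 \<Longrightarrow> G \<noteq> 0 \<Longrightarrow> b \<noteq> 0 \<Longrightarrow> P * (a * G) / (G * (P * b)) = a / b"
proof -
  assume h: "(P::real) \<noteq> 0" "G \<noteq> 0" "b \<noteq> 0"
  have "P * (a * G) = (P * G) * a" by (simp add: ac_simps)
  moreover have "G * (P * b) = (P * G) * b" by (simp add: ac_simps)
  ultimately show ?thesis using h by simp
qed
lemma aux_frac2: "(P::real) \<noteq> 0 \<Longrightarrow> G \<noteq> 0 \<Longrightarrow> B \<noteq> 0 \<Longrightarrow> P * ((a + 1) * a * G) / (G * (P * B)) = a * (a + 1) / B"
  using aux_frac1[of P G B "(a + 1) * a"] by (simp add: ac_simps)

lemma gamma_mean: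
  fixes Y :: "'a \<Rightarrow> real"
  assumes D: "distributed M lborel Y (\<lambda>x. ennreal (gamma_density a b x))"
    and a: "a > 0" and b: "b > 0"
  shows "integrable M Y" and "(\<integral>\<omega>. Y \<omega> \<partial>M) = a / b"
proof -
  have an: "a \<notin> \<int>\<^sub>\<le>\<^sub>0" using a by (auto elim!: nonpos_Ints_cases)
  have g1: "Gamma (a + 1) = a * Gamma a" using Gamma_plus1[OF an] .
  have gp: "Gamma a \<noteq> 0" using Gamma_real_pos[OF a] by linarith
  have pw: "b powr (a + 1) = b powr a * b" using b by (simp add: powr_add)
  have X: "b powr a * Gamma (a + 1) / (Gamma a * b powr (a + 1)) = a / b"
    unfolding g1 pw by (rule aux_frac1) (use b gp in auto)
  have "integrable M (\<lambda>\<omega>. Y \<omega> ^ 1 * exp (0 * Y \<omega>))" by (rule gamma_moment(1)[OF D a b b])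
  then show "integrable M Y" by simp
  have "(\<integral>\<omega>. Y \<omega> ^ 1 * exp (0 * Y \<omega>) \<partial>M) = b powr a * Gamma (a + 1) / (Gamma a * (b - 0) powr (a + 1))" 
    using gamma_moment(2)[OF D a b b, of 1] by simp
  then show "(\<integral>\<omega>. Y \<omega> \<partial>M) = a / b" using X by simp
qed

lemma gamma_second:
  fixes Y :: "'a \<Rightarrow> real"
  assumes D: "distributed M lborel Y (\<lambda>x. ennreal (gamma_density a b x))"
    and a: "a > 0" and b: "b > 0"
  shows "integrable M (\<lambda>\<omega>. (Y \<omega>)\<^sup>2)" and "(\<integral>\<omega>. (Y \<omega>)\<^sup>2 \<partial>M) = a * (a + 1) / b\<^sup>2"
proof -
  have an: "a \<notin> \<int>\<^sub>\<le>\<^sub>0" using a by (auto elim!: nonpos_Ints_cases)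
  have an1: "a + 1 \<notin> \<int>\<^sub>\<le>\<^sub>0" using a by (auto elim!: nonpos_Ints_cases)
  have "Gamma (a + 1 + 1) = (a + 1) * Gamma (a + 1)" using Gamma_plus1[OF an1] .
  then have g2: "Gamma (a + 2) = (a + 1) * a * Gamma a"
    using Gamma_plus1[OF an] by (simp add: add.assoc)
  have gp: "Gamma a \<noteq> 0" using Gamma_real_pos[OF a] by linarith
  have pw: "b powr (a + 2) = b powr a * b^2" using b by (simp add: powr_add)
  have X: "b powr a * Gamma (a + 2) / (Gamma a * b powr (a + 2)) = a * (a + 1) / b\<^sup>2"
    unfolding g2 pw by (rule aux_frac2) (use b gp in auto)
  have "integrable M (\<lambda>\<omega>. Y \<omega> ^ 2 * exp (0 * Y \<omega>))" by (rule gamma_moment(1)[OF D a b b])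
  then show "integrable M (\<lambda>\<omega>. (Y \<omega>)\<^sup>2)" by simp
  have "(\<integral>\<omega>. Y \<omega> ^ 2 * exp (0 * Y \<omega>) \<partial>M) = b powr a * Gamma (a + 2) / (Gamma a * (b - 0) powr (a + 2))" 
    using gamma_moment(2)[OF D a b b, of 2] by simp
  then show "(\<integral>\<omega>. (Y \<omega>)\<^sup>2 \<partial>M) = a * (a + 1) / b\<^sup>2" using X by simp
qed

lemma gamma_mgf:
  fixes Y :: "'a \<Rightarrow> real"
  assumes D: "distributed M lborel Y (\<lambda>x. ennreal (gamma_density a b x))"
    and a: "a > 0" and b: "b > 0" and t: "t < b"
  shows "integrable M (\<lambda>\<omega>. exp (t * Y \<omega>))"
    and "(\<integral>\<omega>. exp (t * Y \<omega>) \<partial>M) = (b / (b - t)) powr a"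
proof -
  have gp: "Gamma a \<noteq> 0" using Gamma_real_pos[OF a] by linarith
  have X: "b powr a * Gamma (a + 0) / (Gamma a * (b - t) powr (a + 0)) = (b / (b - t)) powr a"
    using gp b t by (simp add: powr_divide)
  have "integrable M (\<lambda>\<omega>. Y \<omega> ^ 0 * exp (t * Y \<omega>))" by (rule gamma_moment(1)[OF D a b t])
  then show "integrable M (\<lambda>\<omega>. exp (t * Y \<omega>))" by simp
  have "(\<integral>\<omega>. Y \<omega> ^ 0 * exp (t * Y \<omega>) \<partial>M) = b powr a * Gamma (a + 0) / (Gamma a * (b - t) powr (a + 0))" 
    using gamma_moment(2)[OF D a b t, of 0] by simp
  then show "(\<integral>\<omega>. exp (t * Y \<omega>) \<partial>M) = (b / (b - t)) powr a" using X by simp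
qed


lemma normal_exp_identity:
  fixes s :: real assumes s: "s > 0"
  shows "normal_density m s x * exp (t * x) = exp (m * t + s\<^sup>2 * t\<^sup>2 / 2) * normal_density (m + s\<^sup>2 * t) s x"
proof -
  have e: "-(x - m)\<^sup>2 / (2 * s\<^sup>2) + t * x = (m * t + s\<^sup>2 * t\<^sup>2 / 2) + (-(x - (m + s\<^sup>2 * t))\<^sup>2 / (2 * s\<^sup>2))"
  proof -
    have "(-(x - (m + s\<^sup>2 * t))\<^sup>2) = -(x - m)\<^sup>2 + 2 * s\<^sup>2 * (t * x - m * t) - s\<^sup>2 * s\<^sup>2 * t\<^sup>2"
      by (simp add: power2_eq_square algebra_simps)
    then have "(-(x - (m + s\<^sup>2 * t))\<^sup>2) / (2 * s\<^sup>2) = -(x - m)\<^sup>2 / (2 * s\<^sup>2) + (t * x - m * t) - s\<^sup>2 * t\<^sup>2 / 2"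
      using s by (simp add: add_divide_distrib diff_divide_distrib power2_eq_square)
    then show ?thesis by simp
  qed
  have "normal_density m s x * exp (t * x) = 1 / sqrt (2 * pi * s\<^sup>2) * exp (-(x - m)\<^sup>2 / (2 * s\<^sup>2) + t * x)"
    unfolding normal_density_def by (simp only: exp_add mult.assoc)
  also have "\<dots> = 1 / sqrt (2 * pi * s\<^sup>2) * exp ((m * t + s\<^sup>2 * t\<^sup>2 / 2) + (-(x - (m + s\<^sup>2 * t))\<^sup>2 / (2 * s\<^sup>2)))"
    by (simp only: e)
  also have "\<dots> = exp (m * t + s\<^sup>2 * t\<^sup>2 / 2) * normal_density (m + s\<^sup>2 * t) s x"
    unfolding normal_density_def by (simp only: exp_add mult.assoc mult.left_commute)
  finally show ?thesis .
qed

lemma normal_mgf: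
  fixes Z :: "'a \<Rightarrow> real"
  assumes D: "distributed M lborel Z (\<lambda>x. ennreal (normal_density m s x))" and s: "s > 0"
  shows "integrable M (\<lambda>\<omega>. exp (t * Z \<omega>))"
    and "(\<integral>\<omega>. exp (t * Z \<omega>) \<partial>M) = exp (m * t + s\<^sup>2 * t\<^sup>2 / 2)"
proof -
  let ?g = "\<lambda>x::real. exp (t * x)"
  have gm: "?g \<in> borel_measurable lborel" by measurable
  have HB: "has_bochner_integral lborel (\<lambda>x. normal_density m s x * ?g x) (exp (m * t + s\<^sup>2 * t\<^sup>2 / 2) * 1)"
    unfolding normal_exp_identity[OF s]
  proof (rule has_bochner_integral_mult_right)
    have "has_bochner_integral lborel (normal_density (m + s\<^sup>2 * t) s) (integral\<^sup>L lborel (normal_density (m + s\<^sup>2 * t) s))"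
      using s by (intro has_bochner_integral_integrable integrable_normal_density)
    then show "has_bochner_integral lborel (normal_density (m + s\<^sup>2 * t) s) 1"
      using s by simp
  qed
  show "integrable M (\<lambda>\<omega>. exp (t * Z \<omega>))"
    using distributed_integrable[OF D gm] integrable.intros[OF HB] by simp
  have "(\<integral>\<omega>. exp (t * Z \<omega>) \<partial>M) = (\<integral>x. normal_density m s x * ?g x \<partial>lborel)"
    using distributed_integral[OF D gm] by simp
  also have "\<dots> = exp (m * t + s\<^sup>2 * t\<^sup>2 / 2) * 1"
    using HB by (rule has_bochner_integral_integral_eq)
  finally show "(\<integral>\<omega>. exp (t * Z \<omega>) \<partial>M) = exp (m * t + s\<^sup>2 * t\<^sup>2 / 2)" by simp
qed


lemma iter_deriv_step:
  assumes U: "open U" "x \<in> U" and H: "\<forall>y\<in>U. (deriv ^^ j) f y = H y"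
    and D: "(H has_field_derivative D) (at x)"
  shows "(deriv ^^ Suc j) f x = D"
proof -
  have "(deriv ^^ Suc j) f x = deriv ((deriv ^^ j) f) x" by simp
  also have "\<dots> = deriv H x"
  proof (rule deriv_cong_ev)
    show "\<forall>\<^sub>F y in nhds x. (deriv ^^ j) f y = H y"
      using U H by (auto simp: eventually_nhds)
  qed simp
  also have "\<dots> = D" using D by (rule DERIV_imp_deriv)
  finally show ?thesis .
qed

lemma term_deriv:
  fixes c b t :: real and k :: nat assumes "t < b"
  shows "((\<lambda>t. c / (b - t) ^ Suc k) has_field_derivative c * real (Suc k) / (b - t) ^ Suc (Suc k)) (at t)"
proof -
  have ne2: "b \<noteq> t" using assms by simp
  show ?thesis
    apply (rule DERIV_cong)
    apply (rule derivative_eq_intros refl | simp add: ne2)+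
    done
qed

lemma cgf_sum_derivs:
  fixes a b :: "nat \<Rightarrow> real" and I :: "nat set" and m :: real
  assumes bm: "\<forall>i\<in>I. m \<le> b i"
  shows "\<forall>t<m. (deriv ^^ Suc k) (\<lambda>t. \<Sum>i\<in>I. a i * (ln (b i) - ln (b i - t))) t
           = (\<Sum>i\<in>I. a i * fact k / (b i - t) ^ Suc k)"
proof (induction k)
  case 0
  show ?case
  proof (intro allI impI)
    fix t assume t: "t < m"
    show "(deriv ^^ Suc 0) (\<lambda>t. \<Sum>i\<in>I. a i * (ln (b i) - ln (b i - t))) t
           = (\<Sum>i\<in>I. a i * fact 0 / (b i - t) ^ Suc 0)"
    proof (rule iter_deriv_step[where U = "{..<m}" and j = 0])
      show "((\<lambda>t. \<Sum>i\<in>I. a i * (ln (b i) - ln (b i - t))) has_field_derivative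
              (\<Sum>i\<in>I. a i * fact 0 / (b i - t) ^ Suc 0)) (at t)"
      proof (rule DERIV_sum)
        fix i assume i: "i \<in> I"
        then have bt: "b i - t > 0" using bm t by force
        show "((\<lambda>t. a i * (ln (b i) - ln (b i - t))) has_field_derivative a i * fact 0 / (b i - t) ^ Suc 0) (at t)"
          by (rule derivative_eq_intros refl | use bt in simp)+
      qed
    qed (use t in auto)
  qed
next
  case (Suc k)
  show ?case
  proof (intro allI impI)
    fix t assume t: "t < m"
    show "(deriv ^^ Suc (Suc k)) (\<lambda>t. \<Sum>i\<in>I. a i * (ln (b i) - ln (b i - t))) t
           = (\<Sum>i\<in>I. a i * fact (Suc k) / (b i - t) ^ Suc (Suc k))"
    proof (rule iter_deriv_step[where U = "{..<m}"])
      show "\<forall>y\<in>{..<m}. (deriv ^^ Suc k) (\<lambda>t. \<Sum>i\<in>I. a i * (ln (b i) - ln (b i - t))) y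
           = (\<lambda>t. \<Sum>i\<in>I. a i * fact k / (b i - t) ^ Suc k) y" using Suc.IH by auto
      show "((\<lambda>t. \<Sum>i\<in>I. a i * fact k / (b i - t) ^ Suc k) has_field_derivative
              (\<Sum>i\<in>I. a i * fact (Suc k) / (b i - t) ^ Suc (Suc k))) (at t)"
      proof (rule DERIV_sum)
        fix i assume i: "i \<in> I"
        then have bt: "t < b i" using bm t by force
        show "((\<lambda>t. a i * fact k / (b i - t) ^ Suc k) has_field_derivative a i * fact (Suc k) / (b i - t) ^ Suc (Suc k)) (at t)"
          using term_deriv[OF bt, of "a i * fact k" k] by (simp add: algebra_simps)
      qed
    qed (use t in auto)
  qed
qed


lemma iter_deriv_local:
  assumes U: "open U" and fg: "\<forall>y\<in>U. f y = g y"
  shows "x \<in> U \<Longrightarrow> (deriv ^^ j) f x = (deriv ^^ j) g x"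
proof (induction j arbitrary: x)
  case 0
  then show ?case using fg by simp
next
  case (Suc j)
  have "(deriv ^^ Suc j) f x = deriv ((deriv ^^ j) f) x" by simp
  also have "\<dots> = deriv ((deriv ^^ j) g) x"
  proof (rule deriv_cong_ev)
    show "\<forall>\<^sub>F y in nhds x. (deriv ^^ j) f y = (deriv ^^ j) g y"
      using U Suc by (auto simp: eventually_nhds)
  qed simp
  finally show ?case by simp
qed

lemma quad_derivs:
  fixes m v x :: real
  shows "(deriv ^^ 1) (\<lambda>t. m * t + v * t\<^sup>2 / 2) x = m + v * x"
    and "(deriv ^^ 2) (\<lambda>t. m * t + v * t\<^sup>2 / 2) x = v"
    and "j \<ge> 3 \<Longrightarrow> (deriv ^^ j) (\<lambda>t. m * t + v * t\<^sup>2 / 2) x = 0"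
proof -
  let ?q = "\<lambda>t::real. m * t + v * t\<^sup>2 / 2"
  have d1: "(deriv ^^ Suc 0) ?q y = m + v * y" for y
  proof (rule iter_deriv_step[where U = UNIV and H = ?q])
    show "(?q has_field_derivative m + v * y) (at y)"
      by (rule DERIV_cong, (rule derivative_eq_intros refl | simp)+)
  qed auto
  then show "(deriv ^^ 1) ?q x = m + v * x" by simp
  have d2: "(deriv ^^ Suc (Suc 0)) ?q y = v" for y
  proof (rule iter_deriv_step[where U = UNIV and H = "\<lambda>y. m + v * y"])
    show "((\<lambda>y. m + v * y) has_field_derivative v) (at y)"
      by (rule DERIV_cong, (rule derivative_eq_intros refl | simp)+)
  qed (use d1 in auto)
  then show "(deriv ^^ 2) ?q x = v" by (simp add: numeral_2_eq_2)
  have d3: "(deriv ^^ Suc (Suc (Suc k))) ?q y = 0" for k y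
  proof (induction k arbitrary: y)
    case 0
    show ?case
    proof (rule iter_deriv_step[where U = UNIV and H = "\<lambda>y. v"])
      show "((\<lambda>y. v) has_field_derivative 0) (at y)" by simp
    qed (use d2 in auto)
  next
    case (Suc k)
    show ?case
    proof (rule iter_deriv_step[where U = UNIV and H = "\<lambda>y. 0"])
      show "((\<lambda>y. 0) has_field_derivative 0) (at y)" by simp
    qed (use Suc.IH in auto)
  qed
  assume j: "j \<ge> 3"
  then obtain k where "j = Suc (Suc (Suc k))" by (intro that[of "j - 3"]) simp
  then show "(deriv ^^ j) ?q x = 0" using d3 by simp
qed


lemma convex_pow_nonneg: "convex_on {0::real..} (\<lambda>x. x ^ k)"
proof (cases "even k")
  case True
  then show ?thesis using convex_on_subset[OF convex_power_even[OF True]] by auto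
next
  case False
  then show ?thesis using convex_power_odd by auto
qed

lemma cumulant_ineq:
  fixes a b :: "nat \<Rightarrow> real" and I :: "nat set" and \<alpha> \<beta> :: real
  assumes I: "finite I" "I \<noteq> {}" and ab: "\<And>i. i \<in> I \<Longrightarrow> a i > 0 \<and> b i > 0"
    and \<alpha>: "\<alpha> > 0" and \<beta>: "\<beta> > 0"
    and m1: "\<alpha> / \<beta> = (\<Sum>i\<in>I. a i / b i)" and m2: "\<alpha> / \<beta>\<^sup>2 = (\<Sum>i\<in>I. a i / (b i)\<^sup>2)"
  shows "\<alpha> / \<beta> ^ Suc k \<le> (\<Sum>i\<in>I. a i / b i ^ Suc k)"
proof -
  define \<mu> where "\<mu> = \<alpha> / \<beta>"
  have \<mu>: "\<mu> > 0" using \<alpha> \<beta> by (simp add: \<mu>_def)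
  define w where "w i = (a i / b i) / \<mu>" for i
  define y where "y i = 1 / b i" for i
  have sw: "(\<Sum>i\<in>I. w i) = 1"
  proof -
    have "(\<Sum>i\<in>I. w i) = (\<Sum>i\<in>I. a i / b i) / \<mu>"
      unfolding w_def by (rule sum_divide_distrib[symmetric])
    then show ?thesis using \<mu> m1 unfolding \<mu>_def by simp
  qed
  have wy: "(\<Sum>i\<in>I. w i *\<^sub>R y i) = 1 / \<beta>"
  proof -
    have "(\<Sum>i\<in>I. w i *\<^sub>R y i) = (\<Sum>i\<in>I. a i / (b i)\<^sup>2) / \<mu>"
      unfolding w_def y_def by (simp add: sum_divide_distrib power2_eq_square ac_simps)
    also have "\<dots> = 1 / \<beta>" using \<alpha> \<beta> unfolding m2[symmetric] \<mu>_def by (simp add: power2_eq_square)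
    finally show ?thesis .
  qed
  have J: "(\<Sum>i\<in>I. w i *\<^sub>R y i) ^ k \<le> (\<Sum>i\<in>I. w i * (y i) ^ k)"
    by (rule convex_on_sum[OF I convex_pow_nonneg sw])
       (use ab \<mu> in \<open>force simp: w_def y_def\<close>)+
  have R: "(\<Sum>i\<in>I. w i * (y i) ^ k) = (\<Sum>i\<in>I. a i / b i ^ Suc k) / \<mu>"
    unfolding w_def y_def by (simp add: sum_divide_distrib power_divide ac_simps)
  have "(1 / \<beta>) ^ k \<le> (\<Sum>i\<in>I. a i / b i ^ Suc k) / \<mu>" using J unfolding wy R .
  then have "\<mu> * (1 / \<beta>) ^ k \<le> (\<Sum>i\<in>I. a i / b i ^ Suc k)"
    using \<mu> by (simp add: field_simps)
  moreover have "\<mu> * (1 / \<beta>) ^ k = \<alpha> / \<beta> ^ Suc k"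
    unfolding \<mu>_def by (simp add: power_divide)
  ultimately show ?thesis by simp
qed


theorem theorem2:
  fixes M :: "'a measure" and MZ :: "'b measure" and MG :: "'c measure"
    and X :: "nat \<Rightarrow> 'a \<Rightarrow> real" and Z :: "'b \<Rightarrow> real" and G :: "'c \<Rightarrow> real"
    and \<alpha>s \<beta>s :: "nat \<Rightarrow> real" and n :: nat
    and S :: "'a \<Rightarrow> real" and \<mu> \<sigma>2 \<alpha> \<beta> :: real
  assumes "prob_space M" and "n \<ge> 1"
    and "prob_space.indep_vars M (\<lambda>_. borel) X {1..n}"
    and "\<And>i. i \<in> {1..n} \<Longrightarrow> \<alpha>s i > 0 \<and> \<beta>s i > 0"
    and "\<And>i. i \<in> {1..n} \<Longrightarrow> distributed M lborel (X i) (gamma_density (\<alpha>s i) (\<beta>s i))"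
    and S_def: "S = (\<lambda>\<omega>. \<Sum>i=1..n. X i \<omega>)"
    and mu_def: "\<mu> = (\<integral>\<omega>. S \<omega> \<partial>M)"
    and sigma_def: "\<sigma>2 = (\<integral>\<omega>. (S \<omega> - \<mu>)\<^sup>2 \<partial>M)"
    and "prob_space MZ" and "distributed MZ lborel Z (normal_density \<mu> (sqrt \<sigma>2))"
    and "\<alpha> > 0" and "\<beta> > 0" and "\<alpha> / \<beta> = \<mu>" and "\<alpha> / \<beta>\<^sup>2 = \<sigma>2"
    and "prob_space MG" and "distributed MG lborel G (gamma_density \<alpha> \<beta>)"
  shows "(0 < cumulant M S 1 \<and> cumulant M S 1 = cumulant MZ Z 1 \<and>
         cumulant MZ Z 1 = cumulant MG G 1 \<and> cumulant MG G 1 = \<mu>) \<and>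
         (0 < cumulant M S 2 \<and> cumulant M S 2 = cumulant MZ Z 2 \<and>
         cumulant MZ Z 2 = cumulant MG G 2 \<and> cumulant MG G 2 = \<sigma>2) \<and>
         (\<forall>j\<ge>3. 0 = cumulant MZ Z j \<and> cumulant MZ Z j < cumulant MG G j \<and>
                 cumulant MG G j \<le> cumulant M S j)"
proof -
  note PM = assms(1) and n1 = assms(2) and IND = assms(3) and AB = assms(4) and DX = assms(5)
  note PZ = assms(9) and DZ = assms(10) and a0 = assms(11) and b0 = assms(12)
  note m1 = assms(13) and m2 = assms(14) and DG = assms(16)
  interpret prob_space M by (rule PM)
  define I where "I = {1..n}"
  have fI: "finite I" and neI: "I \<noteq> {}" using n1 by (auto simp: I_def)
  have ab: "\<And>i. i \<in> I \<Longrightarrow> \<alpha>s i > 0 \<and> \<beta>s i > 0" using AB by (simp add: I_def)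
  have dx: "\<And>i. i \<in> I \<Longrightarrow> distributed M lborel (X i) (\<lambda>x. ennreal (gamma_density (\<alpha>s i) (\<beta>s i) x))"
    using DX by (simp add: I_def)
  have ind: "indep_vars (\<lambda>_. borel) X I" using IND by (simp add: I_def)
  have Sd: "S = (\<lambda>\<omega>. \<Sum>i\<in>I. X i \<omega>)" using S_def by (simp add: I_def)
  define m where "m i = \<alpha>s i / \<beta>s i" for i
  define v where "v i = \<alpha>s i / (\<beta>s i)\<^sup>2" for i
  have intX: "integrable M (X i)" and EX: "(\<integral>\<omega>. X i \<omega> \<partial>M) = m i" if "i \<in> I" for i
    using gamma_mean[OF dx[OF that]] ab[OF that] by (auto simp: m_def)
  have intX2: "integrable M (\<lambda>\<omega>. (X i \<omega>)\<^sup>2)" and EX2: "(\<integral>\<omega>. (X i \<omega>)\<^sup>2 \<partial>M) = (m i)\<^sup>2 + v i"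
    if "i \<in> I" for i
  proof -
    have "\<alpha>s i * (\<alpha>s i + 1) / (\<beta>s i)\<^sup>2 = (m i)\<^sup>2 + v i"
      by (simp add: m_def v_def power2_eq_square add_divide_distrib distrib_left power_divide)
    then show "integrable M (\<lambda>\<omega>. (X i \<omega>)\<^sup>2)" "(\<integral>\<omega>. (X i \<omega>)\<^sup>2 \<partial>M) = (m i)\<^sup>2 + v i"
      using gamma_second[OF dx[OF that]] ab[OF that] by auto
  qed
  have mu_eq: "\<mu> = (\<Sum>i\<in>I. m i)"
    unfolding mu_def Sd by (simp add: integral_sum intX EX)
  have intXX: "integrable M (\<lambda>\<omega>. X i \<omega> * X j \<omega>)"
    and EXX: "(\<integral>\<omega>. X i \<omega> * X j \<omega> \<partial>M) = m i * m j + (if i = j then v i else 0)"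
    if "i \<in> I" "j \<in> I" for i j
  proof -
    have "integrable M (\<lambda>\<omega>. X i \<omega> * X j \<omega>) \<and>
          (\<integral>\<omega>. X i \<omega> * X j \<omega> \<partial>M) = m i * m j + (if i = j then v i else 0)"
    proof (cases "i = j")
      case True
      then show ?thesis using intX2[OF that(1)] EX2[OF that(1)]
        by (simp add: power2_eq_square)
    next
      case False
      have ij: "indep_vars (\<lambda>_. borel) X {i, j}"
        by (rule indep_vars_subset[OF ind]) (use that in auto)
      have "integrable M (\<lambda>\<omega>. \<Prod>k\<in>{i, j}. X k \<omega>)"
        by (rule indep_vars_integrable[OF _ ij]) (use that intX in auto)
      moreover have "(\<integral>\<omega>. (\<Prod>k\<in>{i, j}. X k \<omega>) \<partial>M) = (\<Prod>k\<in>{i, j}. \<integral>\<omega>. X k \<omega> \<partial>M)"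
        by (rule indep_vars_lebesgue_integral[OF _ ij]) (use that intX in auto)
      ultimately show ?thesis using False EX that by simp
    qed
    then show "integrable M (\<lambda>\<omega>. X i \<omega> * X j \<omega>)"
      "(\<integral>\<omega>. X i \<omega> * X j \<omega> \<partial>M) = m i * m j + (if i = j then v i else 0)" by auto
  qed
  have S2: "(S \<omega>)\<^sup>2 = (\<Sum>i\<in>I. \<Sum>j\<in>I. X i \<omega> * X j \<omega>)" for \<omega>
    unfolding Sd power2_eq_square by (rule sum_product)
  have intS: "integrable M S" unfolding Sd using intX by auto
  have intS2: "integrable M (\<lambda>\<omega>. (S \<omega>)\<^sup>2)" unfolding S2 using intXX by auto
  have ES2: "(\<integral>\<omega>. (S \<omega>)\<^sup>2 \<partial>M) = \<mu>\<^sup>2 + (\<Sum>i\<in>I. v i)"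
  proof -
    have "(\<integral>\<omega>. (S \<omega>)\<^sup>2 \<partial>M) = (\<Sum>i\<in>I. \<Sum>j\<in>I. m i * m j + (if i = j then v i else 0))"
      unfolding S2 using intXX EXX by (simp add: integral_sum)
    also have "\<dots> = (\<Sum>i\<in>I. \<Sum>j\<in>I. m i * m j) + (\<Sum>i\<in>I. v i)"
      using fI by (simp add: sum.distrib)
    also have "(\<Sum>i\<in>I. \<Sum>j\<in>I. m i * m j) = \<mu>\<^sup>2"
      unfolding mu_eq power2_eq_square by (rule sum_product[symmetric])
    finally show ?thesis .
  qed
  have ES: "(\<integral>\<omega>. S \<omega> \<partial>M) = \<mu>" using mu_def by simp
  have sig_eq: "\<sigma>2 = (\<Sum>i\<in>I. v i)"
  proof -
    have "(\<lambda>\<omega>. (S \<omega> - \<mu>)\<^sup>2) = (\<lambda>\<omega>. (S \<omega>)\<^sup>2 - 2 * \<mu> * S \<omega> + \<mu>\<^sup>2)"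
      by (auto simp: power2_eq_square algebra_simps)
    then have "\<sigma>2 = (\<integral>\<omega>. (S \<omega>)\<^sup>2 - 2 * \<mu> * S \<omega> + \<mu>\<^sup>2 \<partial>M)" using sigma_def by simp
    also have "\<dots> = (\<integral>\<omega>. (S \<omega>)\<^sup>2 \<partial>M) - 2 * \<mu> * (\<integral>\<omega>. S \<omega> \<partial>M) + \<mu>\<^sup>2"
      using intS intS2 by (simp add: prob_space)
    finally show ?thesis using ES2 ES by (simp add: power2_eq_square)
  qed
  define b0 where "b0 = Min (\<beta>s ` I)"
  have b0le: "b0 \<le> \<beta>s i" if "i \<in> I" for i unfolding b0_def using fI that by simp
  have b0pos: "b0 > 0" unfolding b0_def using fI neI ab by (subst Min_gr_iff) auto
  have mgfS: "(\<integral>\<omega>. exp (t * S \<omega>) \<partial>M) = (\<Prod>i\<in>I. (\<beta>s i / (\<beta>s i - t)) powr \<alpha>s i)"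
    if t: "t < b0" for t
  proof -
    have tl: "t < \<beta>s i" if "i \<in> I" for i using b0le[OF that] t by simp
    have e: "exp (t * S \<omega>) = (\<Prod>i\<in>I. exp (t * X i \<omega>))" for \<omega>
      unfolding Sd by (simp add: sum_distrib_left exp_sum fI)
    have indE: "indep_vars (\<lambda>_. borel) (\<lambda>i \<omega>. exp (t * X i \<omega>)) I"
      by (rule indep_vars_compose2[OF ind]) simp
    have "(\<integral>\<omega>. exp (t * S \<omega>) \<partial>M) = (\<Prod>i\<in>I. \<integral>\<omega>. exp (t * X i \<omega>) \<partial>M)"
      unfolding e by (rule indep_vars_lebesgue_integral[OF fI indE])
         (use gamma_mgf(1)[OF dx _ _ tl] ab in auto)
    also have "\<dots> = (\<Prod>i\<in>I. (\<beta>s i / (\<beta>s i - t)) powr \<alpha>s i)"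
      by (rule prod.cong) (use gamma_mgf(2)[OF dx _ _ tl] ab in auto)
    finally show ?thesis .
  qed
  define FS where "FS = (\<lambda>t. \<Sum>i\<in>I. \<alpha>s i * (ln (\<beta>s i) - ln (\<beta>s i - t)))"
  have cgfS: "\<forall>t\<in>{..<b0}. ln (\<integral>\<omega>. exp (t * S \<omega>) \<partial>M) = FS t"
  proof
    fix t assume "t \<in> {..<b0}"
    then have t: "t < b0" by simp
    have tl: "t < \<beta>s i" if "i \<in> I" for i using b0le[OF that] t by simp
    have "ln (\<integral>\<omega>. exp (t * S \<omega>) \<partial>M) = (\<Sum>i\<in>I. ln ((\<beta>s i / (\<beta>s i - t)) powr \<alpha>s i))"
      unfolding mgfS[OF t] by (rule ln_prod[OF fI]) (use ab tl in force)
    also have "\<dots> = FS t" unfolding FS_def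
    proof (rule sum.cong[OF refl])
      fix i assume i: "i \<in> I"
      have "\<beta>s i > 0" "\<beta>s i - t > 0" using ab[OF i] tl[OF i] by auto
      then show "ln ((\<beta>s i / (\<beta>s i - t)) powr \<alpha>s i) = \<alpha>s i * (ln (\<beta>s i) - ln (\<beta>s i - t))"
        by (simp add: ln_div)
    qed
    finally show "ln (\<integral>\<omega>. exp (t * S \<omega>) \<partial>M) = FS t" .
  qed
  have KS: "cumulant M S (Suc k) = (\<Sum>i\<in>I. \<alpha>s i * fact k / \<beta>s i ^ Suc k)" for k
  proof -
    have "cumulant M S (Suc k) = (deriv ^^ Suc k) FS 0"
      unfolding cumulant_def by (rule iter_deriv_local[OF _ cgfS]) (use b0pos in auto)
    also have "\<dots> = (\<Sum>i\<in>I. \<alpha>s i * fact k / (\<beta>s i - 0) ^ Suc k)"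
      unfolding FS_def using cgf_sum_derivs[of I b0 \<beta>s k \<alpha>s] b0le b0pos by auto
    finally show ?thesis by simp
  qed
  define FG where "FG = (\<lambda>t. \<Sum>i\<in>{0::nat}. (\<lambda>_. \<alpha>) i * (ln ((\<lambda>_. \<beta>) i) - ln ((\<lambda>_. \<beta>) i - t)))"
  have cgfG: "\<forall>t\<in>{..<\<beta>}. ln (\<integral>\<omega>. exp (t * G \<omega>) \<partial>MG) = FG t"
  proof
    fix t assume "t \<in> {..<\<beta>}"
    then have t: "t < \<beta>" by simp
    show "ln (\<integral>\<omega>. exp (t * G \<omega>) \<partial>MG) = FG t"
      unfolding gamma_mgf(2)[OF DG a0 b0 t] FG_def using t b0 by (simp add: ln_div)
  qed
  have KG: "cumulant MG G (Suc k) = \<alpha> * fact k / \<beta> ^ Suc k" for k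
  proof -
    have "cumulant MG G (Suc k) = (deriv ^^ Suc k) FG 0"
      unfolding cumulant_def by (rule iter_deriv_local[OF _ cgfG]) (use b0 in auto)
    also have "\<dots> = (\<Sum>i\<in>{0::nat}. (\<lambda>_. \<alpha>) i * fact k / ((\<lambda>_. \<beta>) i - 0) ^ Suc k)"
      unfolding FG_def using cgf_sum_derivs[of "{0::nat}" \<beta> "\<lambda>_. \<beta>" k "\<lambda>_. \<alpha>"] b0 by auto
    finally show ?thesis by simp
  qed
  have sig_pos: "\<sigma>2 > 0" using m2 a0 b0 by auto
  have sq: "(sqrt \<sigma>2)\<^sup>2 = \<sigma>2" using sig_pos by simp
  have cgfZ: "(\<lambda>t. ln (\<integral>\<omega>. exp (t * Z \<omega>) \<partial>MZ)) = (\<lambda>t. \<mu> * t + \<sigma>2 * t\<^sup>2 / 2)"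
  proof
    fix t
    show "ln (\<integral>\<omega>. exp (t * Z \<omega>) \<partial>MZ) = \<mu> * t + \<sigma>2 * t\<^sup>2 / 2"
      using normal_mgf(2)[OF DZ, of t] sig_pos sq by simp
  qed
  have KZ1: "cumulant MZ Z 1 = \<mu>" unfolding cumulant_def cgfZ quad_derivs by simp
  have KZ2: "cumulant MZ Z 2 = \<sigma>2" unfolding cumulant_def cgfZ quad_derivs by simp
  have KZ3: "cumulant MZ Z j = 0" if "j \<ge> 3" for j unfolding cumulant_def cgfZ quad_derivs(3)[OF that] ..
  have mI: "\<mu> = (\<Sum>i\<in>I. \<alpha>s i / \<beta>s i)" using mu_eq by (simp add: m_def)
  have vI: "\<sigma>2 = (\<Sum>i\<in>I. \<alpha>s i / (\<beta>s i)\<^sup>2)" using sig_eq by (simp add: v_def)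
  have KS1: "cumulant M S 1 = \<mu>" using KS[of 0] mI by simp
  have KS2: "cumulant M S 2 = \<sigma>2" using KS[of 1] vI by (simp add: numeral_2_eq_2 power2_eq_square)
  have KG1: "cumulant MG G 1 = \<mu>" using KG[of 0] m1 by simp
  have KG2: "cumulant MG G 2 = \<sigma>2" using KG[of 1] m2 by (simp add: numeral_2_eq_2 power2_eq_square)
  have mu_pos: "\<mu> > 0" using m1 a0 b0 by auto
  have K3: "0 < cumulant MG G j \<and> cumulant MG G j \<le> cumulant M S j" if "j \<ge> 3" for j
  proof -
    have "j = Suc (j - 1)" using \<open>j \<ge> 3\<close> by simp
    then obtain k where j: "j = Suc k" by blast
    have ineq: "\<alpha> / \<beta> ^ Suc k \<le> (\<Sum>i\<in>I. \<alpha>s i / \<beta>s i ^ Suc k)"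
      by (rule cumulant_ineq[OF fI neI ab a0 b0]) (use m1 m2 mI vI in auto)
    have "cumulant MG G j = fact k * (\<alpha> / \<beta> ^ Suc k)" unfolding j KG by simp
    moreover have "cumulant M S j = fact k * (\<Sum>i\<in>I. \<alpha>s i / \<beta>s i ^ Suc k)"
      unfolding j KS by (simp add: sum_distrib_left mult.commute)
    moreover have "0 < fact k * (\<alpha> / \<beta> ^ Suc k)" using a0 b0 by simp
    moreover have "fact k * (\<alpha> / \<beta> ^ Suc k) \<le> fact k * (\<Sum>i\<in>I. \<alpha>s i / \<beta>s i ^ Suc k)"
      by (rule mult_left_mono[OF ineq]) simp
    ultimately show ?thesis by simp
  qed
  show ?thesis using KS1 KS2 KG1 KG2 KZ1 KZ2 KZ3 K3 mu_pos sig_pos by auto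
qed

end
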